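(* (i) With $a=1$, $\boldsymbol{\alpha}_0=\boldsymbol{\beta}_0=1$ and for $n\ge1$ \[ \boldsymbol{\alpha}_n(1,k)=q^{-n}-q^{n},\qquad \boldsymbol{\beta}_n(1,k)=\frac{(k,k;q)_{n}(1-2kq^n+kq^{2n})}{(1-k)q^{n}(q,q;q)_n}, \] the pair $(\boldsymbol{\alpha}_n,\boldsymbol{\beta}_n)$ is a WP-Bailey pair relative to $a=1$. (ii) With $a=q$, $\boldsymbol{\alpha}_0=\boldsymbol{\beta}_0=1$ and for $n\ge1$ \[ \boldsymbol{\alpha}_n(q,k)=q^{-n}-q^{n+1},\qquad \boldsymbol{\beta}_n(q,k)=\frac{(k;q)_{n}(k;q)_{n-1}(1-kq^{n-1}-kq^n+kq^{2n})}{q^n(q,q^2;q)_n}, \] the pair $(\boldsymbol{\alpha}_n,\boldsymbol{\beta}_n)$ is a WP-Bailey pair relative to $a=q$.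
   Context: Notation: $(x;q)_n=\prod_{i=0}^{n-1}(1-xq^i)$, $(x_1,\dots,x_j;q)_n=(x_1;q)_n\cdots(x_j;q)_n$. A pair of sequences $(\boldsymbol{\alpha}_n(a,k,q),\boldsymbol{\beta}_n(a,k,q))_{n\ge0}$ is a WP-Bailey pair (relative to $a$, with parameter $k$) if $\boldsymbol{\alpha}_0=1$ and for all $n\ge0$ \[\boldsymbol{\beta}_n=\sum_{j=0}^n\frac{(k/a;q)_{n-j}(k;q)_{n+j}}{(q;q)_{n-j}(aq;q)_{n+j}}\boldsymbol{\alpha}_j.\] $k\neq1$ and parameters generic. *)

theory Defs
  imports Complex_Main
begin

definition qpoch :: "complex \<Rightarrow> complex \<Rightarrow> nat \<Rightarrow> complex" where
  "qpoch x q n = (\<Prod>i<n. 1 - x * q ^ i)"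

definition wp_bailey_pair ::
  "complex \<Rightarrow> complex \<Rightarrow> complex \<Rightarrow> (nat \<Rightarrow> complex) \<Rightarrow> (nat \<Rightarrow> complex) \<Rightarrow> bool" where
  "wp_bailey_pair a k q \<alpha> \<beta> \<longleftrightarrow>
     \<alpha> 0 = 1 \<and>
     (\<forall>n. \<beta> n = (\<Sum>j\<le>n. qpoch (k / a) q (n - j) * qpoch k q (n + j)
                          / (qpoch q q (n - j) * qpoch (a * q) q (n + j)) * \<alpha> j))"

end

theory Submission
  imports Defs
begin

lemma qpoch_Suc: "qpoch x q (Suc n) = qpoch x q n * (1 - x * q ^ n)"
  by (simp add: qpoch_def)

lemma qpoch_0[simp]: "qpoch x q 0 = 1" by (simp add: qpoch_def)

lemma qpoch_qq_nz:
  assumes "\<And>m::nat. m \<ge> 1 \<Longrightarrow> q ^ m \<noteq> 1" and that: "e \<ge> 1"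
  shows "qpoch (q^e) q n \<noteq> 0"
proof -
  have "\<forall>i<n. 1 - q^e * q^i \<noteq> 0"
    using assms that by (auto simp: power_add[symmetric])
  then show ?thesis unfolding qpoch_def by (simp add: prod_zero_iff)
qed

definition T1 :: "complex \<Rightarrow> complex \<Rightarrow> nat \<Rightarrow> nat \<Rightarrow> complex" where
 "T1 k q n j = qpoch k q (n-j) * qpoch k q (n+j) / (qpoch q q (n-j) * qpoch q q (n+j)) * (1 - k*q^(n+j)) * (1 - q^(n-j))"
definition t1 :: "complex \<Rightarrow> complex \<Rightarrow> nat \<Rightarrow> nat \<Rightarrow> complex" where
 "t1 k q n j = qpoch k q (n-j) * qpoch k q (n+j) / (qpoch q q (n-j) * qpoch q q (n+j)) * (inverse (q^j) - q^j)"

lemma alg1: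
  fixes q Q R X k D :: complex
  assumes "q \<noteq> 0" "R \<noteq> 0" "D \<noteq> 0" "D = 1 - q*(q*Q*R^2)"
  shows "X*(1-k*Q) * (1-k*(q*Q*R^2))
       - X*(1-k*(q*Q*R^2))/D * (1 - k*(q*(q*Q*R^2))) * (1-Q)
       = (1-k) * (q*R*Q) * (X*(1-k*(q*Q*R^2))/D * (inverse(q*R) - q*R))"
proof -
  define Y where "Y = X / D"
  have X: "X = Y * D" using assms(3) unfolding Y_def by simp
  have e: "X*(1-k*(q*Q*R^2))/D = Y*(1-k*(q*Q*R^2))" unfolding Y_def by simp
  have "Y*D*(1-k*Q) * (1-k*(q*Q*R^2))
       - Y*(1-k*(q*Q*R^2)) * (1 - k*(q*(q*Q*R^2))) * (1-Q)
       = (1-k) * (q*R*Q) * (Y*(1-k*(q*Q*R^2)) * (inverse(q*R) - q*R))"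
    using assms(1,2) by (simp add: assms(4) field_simps power2_eq_square)
  then show ?thesis unfolding e by (simp add: X)
qed

lemma qq_nz:
  assumes "\<And>m::nat. m \<ge> 1 \<Longrightarrow> q ^ m \<noteq> 1"
  shows "qpoch q q n \<noteq> 0"
  using qpoch_qq_nz[OF assms, of 1] by simp

lemma pow_nz1:
  fixes q :: complex
  assumes "\<And>m::nat. m \<ge> 1 \<Longrightarrow> q ^ m \<noteq> 1"
  shows "1 - q * q^n \<noteq> 0"
  using assms[of "Suc n"] by simp

lemma g1: "(d::complex) \<noteq> 0 \<Longrightarrow> a*u*b/(c*d*e)*w*d = a*b/(c*e)*u*w"
  by (simp add: field_simps)
lemma g2: "(a::complex)*(b*u)/(c*(e*d)) * w * z = a*b/(c*e)*u/d * w * z"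
  by (simp add: divide_inverse mult_ac)
lemma g3: "(a::complex)*(b*u)/(c*(e*d)) * w = a*b/(c*e)*u/d * w"
  by (simp add: divide_inverse mult_ac)

lemma step1:
  fixes q k :: complex
  assumes q0: "q \<noteq> 0" and hq: "\<And>m::nat. m \<ge> 1 \<Longrightarrow> q ^ m \<noteq> 1" and mn: "Suc m \<le> n"
  shows "T1 k q n m - T1 k q n (Suc m) = (1-k)*q^n * t1 k q n (Suc m)"
proof -
  obtain a where n: "n = Suc m + a" using mn le_Suc_ex by blast
  define X where "X = qpoch k q a * qpoch k q (n+m) / (qpoch q q a * qpoch q q (n+m))"
  have e1: "n - m = Suc a" "n - Suc m = a" "n + Suc m = Suc (n+m)" using n by auto
  have C: "q^(n+m) = q*q^a*(q^m)^2" unfolding n by (simp add: power_add power_mult_distrib power2_eq_square mult_ac)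
  have qn: "q^n = q*q^m*q^a" unfolding n by (simp add: power_add)
  have nz1: "1 - q*q^a \<noteq> 0" "1 - q*q^(n+m) \<noteq> 0" using pow_nz1[OF hq] by auto
  have Tm: "T1 k q n m = X*(1-k*q^a)*(1-k*q^(n+m))"
    unfolding T1_def X_def e1 qpoch_Suc power_Suc
    by (simp only: g1[OF nz1(1)])
  have TS: "T1 k q n (Suc m) = X*(1-k*q^(n+m))/(1-q*q^(n+m)) * (1-k*(q*q^(n+m)))*(1-q^a)"
    unfolding T1_def X_def e1 qpoch_Suc power_Suc
    by (simp only: g2)
  have tS: "t1 k q n (Suc m) = X*(1-k*q^(n+m))/(1-q*q^(n+m)) * (inverse(q*q^m)-q*q^m)"
    unfolding t1_def X_def e1 qpoch_Suc power_Suc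
    by (simp only: g3)
  have R0: "q^m \<noteq> 0" using q0 by simp
  have nzD: "1 - q*(q*q^a*(q^m)^2) \<noteq> 0" using nz1(2) unfolding C .
  show ?thesis unfolding Tm TS tS qn C
    using alg1[OF q0 R0 nzD refl, of X k] by simp
qed

lemma sum1:
  fixes q k :: complex
  assumes q0: "q \<noteq> 0" and hq: "\<And>m::nat. m \<ge> 1 \<Longrightarrow> q ^ m \<noteq> 1" and mn: "m \<le> n"
  shows "(1-k)*q^n * (\<Sum>j\<in>{1..m}. t1 k q n j) = T1 k q n 0 - T1 k q n m"
  using mn
proof (induction m)
  case 0 then show ?case by simp
next
  case (Suc m)
  have IH: "(1-k)*q^n * (\<Sum>j\<in>{1..m}. t1 k q n j) = T1 k q n 0 - T1 k q n m" using Suc by simp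
  have "(1-k)*q^n*(\<Sum>j\<in>{1..Suc m}. t1 k q n j) = (1-k)*q^n*(\<Sum>j\<in>{1..m}. t1 k q n j) + (1-k)*q^n*t1 k q n (Suc m)"
    by (simp add: sum.cl_ivl_Suc distrib_left)
  also have "\<dots> = T1 k q n 0 - T1 k q n m + (T1 k q n m - T1 k q n (Suc m))"
    using IH step1[OF q0 hq Suc.prems] by simp
  finally show ?case by simp
qed

lemma main1:
  fixes q k :: complex
  assumes q0: "q \<noteq> 0" and hq: "\<And>m::nat. m \<ge> 1 \<Longrightarrow> q ^ m \<noteq> 1" and k1: "k \<noteq> 1" and n1: "n \<ge> 1"
  shows "(\<Sum>j\<le>n. qpoch (k/1) q (n - j) * qpoch k q (n + j) / (qpoch q q (n - j) * qpoch (1 * q) q (n + j))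
           * (if j = 0 then 1 else inverse (q ^ j) - q ^ j))
       = qpoch k q n * qpoch k q n * (1 - 2 * k * q ^ n + k * q ^ (2 * n))
                / ((1 - k) * q ^ n * qpoch q q n * qpoch q q n)"
proof -
  have ins: "{..n} = insert 0 {1..n}" by auto
  have "(\<Sum>j\<le>n. qpoch (k/1) q (n - j) * qpoch k q (n + j) / (qpoch q q (n - j) * qpoch (1 * q) q (n + j))
           * (if j = 0 then 1 else inverse (q ^ j) - q ^ j))
      = qpoch k q n * qpoch k q n / (qpoch q q n * qpoch q q n) + (\<Sum>j\<in>{1..n}. t1 k q n j)"
    unfolding ins by (simp add: t1_def)
  also have "(\<Sum>j\<in>{1..n}. t1 k q n j) = T1 k q n 0 / ((1-k)*q^n)"
  proof -
    have Tn: "T1 k q n n = 0" by (simp add: T1_def)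
    have h: "(1-k)*q^n * (\<Sum>j\<in>{1..n}. t1 k q n j) = T1 k q n 0"
      using sum1[OF q0 hq order_refl, of k n] Tn by simp
    have c: "(1-k)*q^n \<noteq> 0" using k1 q0 by simp
    show ?thesis using h c by (simp add: eq_divide_eq mult.commute)
  qed
  also have "T1 k q n 0 = qpoch k q n * qpoch k q n / (qpoch q q n * qpoch q q n) * (1 - k*q^n) * (1 - q^n)"
    by (simp add: T1_def)
  finally have eq: "(\<Sum>j\<le>n. qpoch (k/1) q (n - j) * qpoch k q (n + j) / (qpoch q q (n - j) * qpoch (1 * q) q (n + j))
           * (if j = 0 then 1 else inverse (q ^ j) - q ^ j)) = 
     qpoch k q n * qpoch k q n / (qpoch q q n * qpoch q q n) +
     qpoch k q n * qpoch k q n / (qpoch q q n * qpoch q q n) * (1 - k * q ^ n) * (1 - q ^ n) / ((1 - k) * q ^ n)" .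
  have alg: "Pk*Pk/(Pq*Pq) + Pk*Pk/(Pq*Pq)*(1-k*Q)*(1-Q)/((1-k)*Q) = Pk*Pk*(1-2*k*Q+k*Q^2)/((1-k)*Q*Pq*Pq)"
    if "Pq \<noteq> 0" "Q \<noteq> 0" for Pk Pq Q :: complex
    using that k1 by (simp add: field_simps power2_eq_square)
  have q2: "q^(2*n) = (q^n)^2" by (simp add: power_mult mult.commute)
  show ?thesis unfolding eq q2
    by (rule alg) (use qq_nz[OF hq, of n] q0 in auto)
qed

lemma qpoch_Suc': "qpoch x q (Suc n) = (1 - x) * qpoch (x*q) q n"
proof (induction n)
  case 0 then show ?case by (simp add: qpoch_Suc)
next
  case (Suc n)
  have "qpoch x q (Suc (Suc n)) = qpoch x q (Suc n) * (1 - x * q ^ Suc n)" by (rule qpoch_Suc)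
  also have "\<dots> = (1 - x) * (qpoch (x*q) q n * (1 - x*q*q^n))" unfolding Suc by (simp add: mult_ac)
  also have "\<dots> = (1 - x) * qpoch (x*q) q (Suc n)" by (simp add: qpoch_Suc)
  finally show ?case .
qed

definition U2 :: "complex \<Rightarrow> complex \<Rightarrow> nat \<Rightarrow> nat \<Rightarrow> complex" where
 "U2 k q n j = qpoch k q (n-j-1) * qpoch k q (n+j) * (1 - k*q^(n+j)) * (1 - q^(n-j)) / (qpoch q q (n-j) * qpoch (q*q) q (n+j))"
definition t2 :: "complex \<Rightarrow> complex \<Rightarrow> nat \<Rightarrow> nat \<Rightarrow> complex" where
 "t2 k q n j = qpoch (k/q) q (n-j) * qpoch k q (n+j) / (qpoch q q (n-j) * qpoch (q*q) q (n+j)) * (inverse (q^j) - q^(j+1))"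

lemma qqq_nz:
  fixes q :: complex
  assumes "\<And>m::nat. m \<ge> 1 \<Longrightarrow> q ^ m \<noteq> 1"
  shows "qpoch (q*q) q n \<noteq> 0"
  using qpoch_qq_nz[OF assms, of 2] by (simp add: power2_eq_square)

lemma pow_nz2:
  fixes q :: complex
  assumes "\<And>m::nat. m \<ge> 1 \<Longrightarrow> q ^ m \<noteq> 1"
  shows "1 - q * (q * q^n) \<noteq> 0" "1 - q * q * q^n \<noteq> 0"
  using assms[of "Suc (Suc n)"] by (auto simp: mult.assoc)

lemma alg2:
  fixes q Q R X k D1 D2 :: complex
  assumes "q \<noteq> 0" "R \<noteq> 0" "D1 \<noteq> 0" "D2 \<noteq> 0" "D1 = 1 - q*Q" "D2 = 1 - q*q*(q*q*Q*R^2)"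
  shows "X*(1-k*Q)*(1-k*(q*q*Q*R^2))/D1 - X*(1-k*(q*q*Q*R^2))*(1-k*(q*(q*q*Q*R^2)))/D2
       = (q*q*R*Q) * ((1-k/q)*X*(1-k*(q*q*Q*R^2))/(D1*D2) * (inverse(q*R) - q*(q*R)))"
proof -
  define Y where "Y = X / (D1*D2)"
  have X: "X = Y * (D1*D2)" using assms(3,4) unfolding Y_def by simp
  have e1: "X*(1-k*Q)*(1-k*(q*q*Q*R^2))/D1 = Y*D2*(1-k*Q)*(1-k*(q*q*Q*R^2))"
    using assms(3) unfolding X by simp
  have e2: "X*(1-k*(q*q*Q*R^2))*(1-k*(q*(q*q*Q*R^2)))/D2 = Y*D1*(1-k*(q*q*Q*R^2))*(1-k*(q*(q*q*Q*R^2)))"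
    using assms(4) unfolding X by simp
  have e3: "(1-k/q)*X*(1-k*(q*q*Q*R^2))/(D1*D2) = (1-k/q)*Y*(1-k*(q*q*Q*R^2))"
    using assms(3,4) unfolding X by simp
  have "Y*D2*(1-k*Q)*(1-k*(q*q*Q*R^2)) - Y*D1*(1-k*(q*q*Q*R^2))*(1-k*(q*(q*q*Q*R^2)))
       = (q*q*R*Q) * ((1-k/q)*Y*(1-k*(q*q*Q*R^2)) * (inverse(q*R) - q*(q*R)))"
    using assms(1,2) by (simp add: assms(5,6) field_simps power2_eq_square)
  then show ?thesis unfolding e1 e2 e3 .
qed

lemma h1: "(d::complex) \<noteq> 0 \<Longrightarrow> a*u*b*w*d/(c*e*d*f) = a*b/(c*f)*u*w/e"
  by (simp add: divide_inverse mult_ac)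
lemma h2: "(e::complex) \<noteq> 0 \<Longrightarrow> a*(b*w)*z*e/(c*e*(f*g)) = a*b/(c*f)*w*z/g"
  by (simp add: divide_inverse mult_ac)

lemma step2:
  fixes q k :: complex
  assumes q0: "q \<noteq> 0" and hq: "\<And>m::nat. m \<ge> 1 \<Longrightarrow> q ^ m \<noteq> 1" and mn: "Suc m \<le> n"
  shows "U2 k q n m - U2 k q n (Suc m) = q^n * t2 k q n (Suc m)"
proof (cases "n = Suc m")
  case True
  have e1: "n - m - 1 = 0" "n - m = 1" "n - Suc m = 0" "n + Suc m = Suc (n+m)" using True by auto
  have C: "q^(n+m) = q*(q^m)^2" unfolding True by (simp add: power_add power2_eq_square mult_ac)
  have qn: "q^n = q*q^m" unfolding True by simp
  have nz: "qpoch (q*q) q (n+m) \<noteq> 0" "1 - q \<noteq> 0" "1 - q*q*q^(n+m) \<noteq> 0" "q^m \<noteq> 0"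
    using qqq_nz[OF hq] pow_nz2[OF hq] hq[of 1] q0 by auto
  have Um: "U2 k q n m = qpoch k q (n+m) * (1-k*q^(n+m)) / qpoch (q*q) q (n+m)"
    unfolding U2_def e1 using nz by (simp add: qpoch_Suc)
  have US: "U2 k q n (Suc m) = 0" unfolding U2_def e1 by simp
  have tS: "t2 k q n (Suc m) = qpoch k q (n+m) * (1-k*q^(n+m)) / (qpoch (q*q) q (n+m) * (1-q*q*q^(n+m))) * (inverse (q*q^m) - q*(q*q^m))"
    unfolding t2_def e1 by (simp add: qpoch_Suc)
  have alg: "A*(1-k*(q*R^2))/B = (q*R) * (A*(1-k*(q*R^2))/(B*(1-q*q*(q*R^2))) * (inverse(q*R) - q*(q*R)))"
    if "B \<noteq> 0" "1-q*q*(q*R^2) \<noteq> 0" "R \<noteq> 0" for A B R :: complex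
    using that q0 by (simp add: field_simps power2_eq_square)
  have nz3: "1 - q*q*(q*(q^m)^2) \<noteq> 0" using nz(3) unfolding C .
  show ?thesis unfolding Um US tS qn C diff_zero by (rule alg[OF nz(1) nz3 nz(4)])
next
  case False
  define b where "b = n - Suc m - 1"
  have n: "n = Suc m + Suc b" using mn False unfolding b_def by arith
  define X where "X = qpoch k q b * qpoch k q (n+m) / (qpoch q q b * qpoch (q*q) q (n+m))"
  have e1: "n - m - 1 = Suc b" "n - m = Suc (Suc b)" "n - Suc m - 1 = b" "n - Suc m = Suc b" "n + Suc m = Suc (n+m)"
    using n by auto
  have C: "q^(n+m) = q*q*q^b*(q^m)^2" unfolding n by (simp add: power_add power2_eq_square mult_ac)
  have qn: "q^n = q*q*q^m*q^b" unfolding n by (simp add: power_add mult_ac)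
  have nz: "qpoch (q*q) q (n+m) \<noteq> 0" "qpoch q q b \<noteq> 0" "1 - q*q^b \<noteq> 0" "1 - q*(q*q^b) \<noteq> 0"
     "1 - q*q*q^(n+m) \<noteq> 0" "q^m \<noteq> 0"
    using qqq_nz[OF hq] qq_nz[OF hq] pow_nz1[OF hq] pow_nz2[OF hq] q0 by auto
  have kq: "qpoch (k/q) q (Suc b) = (1-k/q) * qpoch k q b" using q0 by (simp add: qpoch_Suc')
  have Um: "U2 k q n m = X*(1-k*q^b)*(1-k*q^(n+m))/(1-q*q^b)"
    unfolding U2_def X_def e1 qpoch_Suc power_Suc apply (simp only: diff_Suc_1 qpoch_Suc power_Suc)
    by (rule h1[OF nz(4)])
  have US: "U2 k q n (Suc m) = X*(1-k*q^(n+m))*(1-k*(q*q^(n+m)))/(1-q*q*q^(n+m))"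
    unfolding U2_def X_def e1 qpoch_Suc power_Suc apply (simp only: diff_Suc_1 qpoch_Suc power_Suc)
    by (rule h2[OF nz(3)])
  have tS: "t2 k q n (Suc m) = (1-k/q)*X*(1-k*q^(n+m))/((1-q*q^b)*(1-q*q*q^(n+m))) * (inverse(q*q^m) - q*(q*q^m))"
    unfolding t2_def e1 kq unfolding X_def qpoch_Suc power_Suc
    by (simp add: divide_inverse mult_ac)
  show ?thesis unfolding Um US tS qn C
    using alg2[OF q0 nz(6) nz(3) _ refl refl, where X=X and k=k] nz(5) unfolding C by (simp add: mult_ac)
qed

lemma sum2:
  fixes q k :: complex
  assumes q0: "q \<noteq> 0" and hq: "\<And>m::nat. m \<ge> 1 \<Longrightarrow> q ^ m \<noteq> 1" and mn: "m \<le> n"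
  shows "q^n * (\<Sum>j\<in>{1..m}. t2 k q n j) = U2 k q n 0 - U2 k q n m"
  using mn
proof (induction m)
  case 0 then show ?case by simp
next
  case (Suc m)
  have IH: "q^n * (\<Sum>j\<in>{1..m}. t2 k q n j) = U2 k q n 0 - U2 k q n m" using Suc by simp
  have "q^n*(\<Sum>j\<in>{1..Suc m}. t2 k q n j) = q^n*(\<Sum>j\<in>{1..m}. t2 k q n j) + q^n*t2 k q n (Suc m)"
    by (simp add: sum.cl_ivl_Suc distrib_left)
  also have "\<dots> = U2 k q n 0 - U2 k q n m + (U2 k q n m - U2 k q n (Suc m))"
    using IH step2[OF q0 hq Suc.prems] by simp
  finally show ?case by simp
qed

lemma main2:
  fixes q k :: complex
  assumes q0: "q \<noteq> 0" and hq: "\<And>m::nat. m \<ge> 1 \<Longrightarrow> q ^ m \<noteq> 1" and n1: "n \<ge> 1"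
  shows "(\<Sum>j\<le>n. qpoch (k/q) q (n - j) * qpoch k q (n + j) / (qpoch q q (n - j) * qpoch (q * q) q (n + j))
           * (if j = 0 then 1 else inverse (q ^ j) - q ^ (j + 1)))
       = qpoch k q n * qpoch k q (n - 1) * (1 - k * q ^ (n - 1) - k * q ^ n + k * q ^ (2 * n))
                / (q ^ n * qpoch q q n * qpoch (q ^ 2) q n)"
proof -
  define p where "p = n - 1"
  have np: "n = Suc p" using n1 unfolding p_def by simp
  have ins: "{..n} = insert 0 {1..n}" by auto
  have "(\<Sum>j\<le>n. qpoch (k/q) q (n - j) * qpoch k q (n + j) / (qpoch q q (n - j) * qpoch (q * q) q (n + j))
           * (if j = 0 then 1 else inverse (q ^ j) - q ^ (j + 1)))
      = qpoch (k/q) q n * qpoch k q n / (qpoch q q n * qpoch (q*q) q n) + (\<Sum>j\<in>{1..n}. t2 k q n j)"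
    unfolding ins by (simp add: t2_def)
  also have "(\<Sum>j\<in>{1..n}. t2 k q n j) = U2 k q n 0 / q^n"
  proof -
    have Tn: "U2 k q n n = 0" by (simp add: U2_def)
    have h: "q^n * (\<Sum>j\<in>{1..n}. t2 k q n j) = U2 k q n 0"
      using sum2[OF q0 hq order_refl, where k=k] Tn by simp
    have c: "q^n \<noteq> 0" using q0 by simp
    show ?thesis using h c by (simp add: eq_divide_eq mult.commute)
  qed
  also have "U2 k q n 0 = qpoch k q p * qpoch k q n * (1 - k*(q*q^p)) * (1 - q*q^p) / (qpoch q q n * qpoch (q*q) q n)"
    unfolding U2_def p_def using np by simp
  also have "qpoch (k/q) q n = (1 - k/q) * qpoch k q p" unfolding np using q0 by (simp add: qpoch_Suc')
  finally have eq: "(\<Sum>j\<le>n. qpoch (k/q) q (n - j) * qpoch k q (n + j) / (qpoch q q (n - j) * qpoch (q * q) q (n + j))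
           * (if j = 0 then 1 else inverse (q ^ j) - q ^ (j + 1))) =
     (1 - k/q) * qpoch k q p * qpoch k q n / (qpoch q q n * qpoch (q*q) q n) +
     qpoch k q p * qpoch k q n * (1 - k*(q*q^p)) * (1 - q*q^p) / (qpoch q q n * qpoch (q*q) q n) / q^n" .
  have alg: "(1-k/q)*Pk1*Pk/(Pq*Pqq) + Pk1*Pk*(1-k*(q*Q))*(1-q*Q)/(Pq*Pqq)/(q*Q)
     = Pk*Pk1*(1-k*Q-k*(q*Q)+k*(q*Q)^2)/((q*Q)*Pq*Pqq)"
    if "Pq \<noteq> 0" "Pqq \<noteq> 0" "Q \<noteq> 0" for Pk Pk1 Pq Pqq Q :: complex
    using that q0 by (simp add: field_simps power2_eq_square)
  have q2: "q^(2*n) = (q*q^p)^2" unfolding np by (simp add: power_mult mult.commute power2_eq_square)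
  have qn: "q^n = q*q^p" unfolding np by simp
  have n1': "n - 1 = p" unfolding p_def ..
  have qq: "q^2 = q*q" by (simp add: power2_eq_square)
  show ?thesis unfolding eq q2 n1' qq unfolding qn
    by (rule alg) (use qq_nz[OF hq, of n] qqq_nz[OF hq, of n] q0 in auto)
qed

theorem mainTheorem9:
  fixes q k :: complex
  assumes "q \<noteq> 0" and "\<And>m::nat. m \<ge> 1 \<Longrightarrow> q ^ m \<noteq> 1" and "k \<noteq> 1"
  shows "wp_bailey_pair 1 k q
           (\<lambda>n. if n = 0 then 1 else inverse (q ^ n) - q ^ n)
           (\<lambda>n. if n = 0 then 1 else
                qpoch k q n * qpoch k q n * (1 - 2 * k * q ^ n + k * q ^ (2 * n))
                / ((1 - k) * q ^ n * qpoch q q n * qpoch q q n))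
       \<and> wp_bailey_pair q k q
           (\<lambda>n. if n = 0 then 1 else inverse (q ^ n) - q ^ (n + 1))
           (\<lambda>n. if n = 0 then 1 else
                qpoch k q n * qpoch k q (n - 1) * (1 - k * q ^ (n - 1) - k * q ^ n + k * q ^ (2 * n))
                / (q ^ n * qpoch q q n * qpoch (q ^ 2) q n))"
  unfolding wp_bailey_pair_def
  apply (intro conjI allI)
     apply simp
    subgoal for n
      apply (cases "n = 0")
       apply simp
      using main1[OF assms(1,2,3), of n] by simp
   apply simp
  subgoal for n
    apply (cases "n = 0")
     apply simp
    using main2[OF assms(1,2), where n=n and k=k] by simp
  done

end
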